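(* Let $\mathbb{F}$ be a field, let $V$ be an infinite-dimensional vector space over $\mathbb{F}$, and let $p_1,p_2,p_3\in\mathbb{F}[t]$ be split polynomials of degree $2$. Let $u$ be an endomorphism of $V$ with a dominant eigenvalue $\lambda$, and assume that $u$ is a $(p_1,p_2,p_3)$-sum. Then $\lambda$ is a $(p_1,p_2,p_3)$-sum (as a scalar) or $2\lambda=\operatorname{tr}p_1+\operatorname{tr}p_2+\operatorname{tr}p_3$.
   Context: A scalar $\lambda$ is a dominant eigenvalue of $u\in\mathrm{End}(V)$ if $\operatorname{rk}(u-\lambda\,\mathrm{id}_V)<\dim V$. An endomorphism $u$ is a $(p_1,p_2,p_3)$-sum if $u=u_1+u_2+u_3$ for some endomorphisms $u_k$ of $V$ with $p_k(u_k)=0$ for all $k$. A scalar $\lambda$ is a $(p_1,p_2,p_3)$-sum if $\lambda=x_1+x_2+x_3$ for some $x_1,x_2,x_3\in\mathbb{F}$ with $p_k(x_k)=0$ for all $k$. The trace of a monic polynomial of degree $n>0$ is the opposite of its coefficient on $t^{n-1}$; the trace $\operatorname{tr}p$ of a nonconstant polynomial $p$ with leading coefficient $\alpha$ is the trace of $\alpha^{-1}p$. *)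

theory Defs
  imports Main "HOL-Computational_Algebra.Polynomial"
begin

text \<open>A vector space V over a field 'a is modelled as a type 'v (additive group)
  with a scalar multiplication scale satisfying the locale vector_space.
  Endomorphisms are linear maps 'v to 'v.\<close>

definition is_basis_of :: "('a::field \<Rightarrow> 'v::ab_group_add \<Rightarrow> 'v) \<Rightarrow> 'v set \<Rightarrow> 'v set \<Rightarrow> bool" where
  "is_basis_of scale S B \<longleftrightarrow> B \<subseteq> S \<and> \<not> module.dependent scale B \<and> module.span scale B = S"

definition infinite_dimensional :: "('a::field \<Rightarrow> 'v::ab_group_add \<Rightarrow> 'v) \<Rightarrow> bool" where
  "infinite_dimensional scale \<longleftrightarrow> \<not> (\<exists>B. finite B \<and> module.span scale B = UNIV)"

text \<open>rk(u - lambda id) < dim V, as a comparison of cardinals (cardinalities of bases).\<close>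
definition dominant_eigenvalue :: "('a::field \<Rightarrow> 'v::ab_group_add \<Rightarrow> 'v) \<Rightarrow> ('v \<Rightarrow> 'v) \<Rightarrow> 'a \<Rightarrow> bool" where
  "dominant_eigenvalue scale u lam \<longleftrightarrow>
     (\<exists>B C. is_basis_of scale UNIV B \<and>
            is_basis_of scale (range (\<lambda>x. u x - scale lam x)) C \<and>
            ordLess2 (card_of C) (card_of B))"

definition poly_endo :: "('a::field \<Rightarrow> 'v::ab_group_add \<Rightarrow> 'v) \<Rightarrow> 'a poly \<Rightarrow> ('v \<Rightarrow> 'v) \<Rightarrow> 'v \<Rightarrow> 'v" where
  "poly_endo scale p u x = (\<Sum>i\<le>degree p. scale (coeff p i) ((u ^^ i) x))"

definition annihilates :: "('a::field \<Rightarrow> 'v::ab_group_add \<Rightarrow> 'v) \<Rightarrow> 'a poly \<Rightarrow> ('v \<Rightarrow> 'v) \<Rightarrow> bool" where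
  "annihilates scale p u \<longleftrightarrow> (\<forall>x. poly_endo scale p u x = 0)"

definition is_sum3 :: "('a::field \<Rightarrow> 'v::ab_group_add \<Rightarrow> 'v) \<Rightarrow> 'a poly \<Rightarrow> 'a poly \<Rightarrow> 'a poly \<Rightarrow> ('v \<Rightarrow> 'v) \<Rightarrow> bool" where
  "is_sum3 scale p1 p2 p3 u \<longleftrightarrow>
     (\<exists>u1 u2 u3. Vector_Spaces.linear scale scale u1 \<and> Vector_Spaces.linear scale scale u2 \<and>
        Vector_Spaces.linear scale scale u3 \<and>
        annihilates scale p1 u1 \<and> annihilates scale p2 u2 \<and> annihilates scale p3 u3 \<and>
        (\<forall>x. u x = u1 x + u2 x + u3 x))"

definition scalar_sum3 :: "'a::field poly \<Rightarrow> 'a poly \<Rightarrow> 'a poly \<Rightarrow> 'a \<Rightarrow> bool" where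
  "scalar_sum3 p1 p2 p3 lam \<longleftrightarrow>
     (\<exists>x1 x2 x3. poly p1 x1 = 0 \<and> poly p2 x2 = 0 \<and> poly p3 x3 = 0 \<and> lam = x1 + x2 + x3)"

definition split_poly :: "'a::field poly \<Rightarrow> bool" where
  "split_poly p \<longleftrightarrow> p \<noteq> 0 \<and> (\<exists>rs. p = smult (lead_coeff p) (\<Prod>r\<leftarrow>rs. [:-r, 1:]))"

definition tr_poly :: "'a::field poly \<Rightarrow> 'a" where
  "tr_poly p = - coeff p (degree p - 1) / lead_coeff p"

end

theory Submission
  imports Defs
begin
unbundle cardinal_syntax

context vector_space begin

lemma in_span_finite_subset:
  assumes "x \<in> span S" shows "\<exists>T. finite T \<and> T \<subseteq> S \<and> x \<in> span T"
proof -
  from assms obtain t r where t: "finite t" "t \<subseteq> S" and x: "x = (\<Sum>a\<in>t. r a *s a)"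
    unfolding span_explicit by blast
  have "x \<in> span t" unfolding x by (intro span_sum span_scale span_base) 
  with t show ?thesis by blast
qed

lemma indep_card_le:
  assumes ind: "independent B" and Bsp: "span B = UNIV" and inf: "infinite D"
    and sub: "B \<subseteq> span D"
  shows "|B| \<le>o |D|"
proof -
  have "\<forall>d. \<exists>G. finite G \<and> G \<subseteq> B \<and> d \<in> span G"
    using in_span_finite_subset Bsp by blast
  then obtain G where G: "\<And>d. finite (G d) \<and> G d \<subseteq> B \<and> d \<in> span (G d)" by metis
  define B' where "B' = (\<Union>d\<in>D. G d)"
  have B'B: "B' \<subseteq> B" using G unfolding B'_def by blast
  have "D \<subseteq> span B'"
  proof
    fix d assume "d \<in> D"
    then have "G d \<subseteq> B'" unfolding B'_def by blast
    then show "d \<in> span B'" using G span_mono by blast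
  qed
  then have "span D \<subseteq> span B'" by (metis span_mono span_span)
  have "B \<subseteq> B'"
  proof
    fix b assume b: "b \<in> B"
    show "b \<in> B'"
    proof (rule ccontr)
      assume "b \<notin> B'"
      then have "B' \<subseteq> B - {b}" using B'B by blast
      then have "b \<in> span (B - {b})" using sub b \<open>span D \<subseteq> span B'\<close> span_mono by blast
      then have "dependent B" using b unfolding dependent_def by blast
      with ind show False by simp
    qed
  qed
  have "|B'| \<le>o |D|" unfolding B'_def
    by (rule card_of_UNION_ordLeq_infinite[OF inf ordLeq_refl[OF card_of_Card_order]])
       (use G inf ordLeq3_finite_infinite in blast)
  with \<open>B \<subseteq> B'\<close> B'B have "B = B'" by blast
  with \<open>|B'| \<le>o |D|\<close> show ?thesis by simp
qed

end

locale idl = vector_space scale for scale :: "'a::field \<Rightarrow> 'v::ab_group_add \<Rightarrow> 'v" (infixr \<open>*s\<close> 75) +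
  fixes B0 :: "'v set"
  assumes indB0: "independent B0" and spB0: "span B0 = UNIV"
    and infdim: "\<And>B. finite B \<Longrightarrow> span B \<noteq> UNIV"
begin

definition inI :: "('v \<Rightarrow> 'v) \<Rightarrow> bool" where
  "inI f \<longleftrightarrow> (\<exists>D. |D| <o |B0| \<and> range f \<subseteq> span D)"

lemma infB0: "infinite B0" using infdim spB0 by blast

lemma inI_add: "inI f \<Longrightarrow> inI g \<Longrightarrow> inI (\<lambda>v. f v + g v)"
proof -
  assume "inI f" "inI g"
  then obtain D1 D2 where D: "|D1| <o |B0|" "range f \<subseteq> span D1" "|D2| <o |B0|" "range g \<subseteq> span D2"
    unfolding inI_def by blast
  have "|D1 \<union> D2| <o |B0|" using card_of_Un_ordLess_infinite infB0 D by blast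
  moreover have "range (\<lambda>v. f v + g v) \<subseteq> span (D1 \<union> D2)"
  proof safe
    fix v
    have "f v \<in> span (D1 \<union> D2)" using D(2) span_mono[of D1 "D1 \<union> D2"] by blast
    moreover have "g v \<in> span (D1 \<union> D2)" using D(4) span_mono[of D2 "D1 \<union> D2"] by blast
    ultimately show "f v + g v \<in> span (D1 \<union> D2)" by (rule span_add)
  qed
  ultimately show ?thesis unfolding inI_def by blast
qed

lemma inI_scale: "inI f \<Longrightarrow> inI (\<lambda>v. c *s f v)"
  unfolding inI_def by (auto intro: span_scale)

lemma inI_neg: "inI f \<Longrightarrow> inI (\<lambda>v. - f v)"
  using inI_scale[of f "-1"] by simp

lemma inI_diff: "inI f \<Longrightarrow> inI g \<Longrightarrow> inI (\<lambda>v. f v - g v)"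
  using inI_add[of f "\<lambda>v. - g v"] inI_neg[of g] by simp

lemma inI_right: "inI f \<Longrightarrow> inI (\<lambda>v. f (h v))"
  unfolding inI_def by blast

lemma inI_left: assumes h: "Vector_Spaces.linear scale scale h" and f: "inI f" shows "inI (\<lambda>v. h (f v))"
proof -
  obtain D where D: "|D| <o |B0|" "range f \<subseteq> span D" using f unfolding inI_def by blast
  have mh: "module_hom scale scale h" using h module_hom_iff_linear by blast
  have "|h ` D| <o |B0|" using card_of_image ordLeq_ordLess_trans D(1) by blast
  moreover have "range (\<lambda>v. h (f v)) \<subseteq> span (h ` D)"
    using module_hom.span_image[OF mh, of D] D(2) by auto
  ultimately show ?thesis unfolding inI_def by blast
qed

lemma inI_cong: "inI f \<Longrightarrow> (\<And>v. g v = f v) \<Longrightarrow> inI g"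
proof -
  assume "inI f" "\<And>v. g v = f v"
  then have "g = f" by auto
  with \<open>inI f\<close> show ?thesis by simp
qed

lemma not_inI_id: "\<not> inI (\<lambda>v. c *s v)" if "c \<noteq> 0"
proof
  assume "inI (\<lambda>v. c *s v)"
  then have "inI (\<lambda>v. inverse c *s (c *s v))" by (rule inI_scale)
  then have "inI (\<lambda>v. v)" using that by simp
  then obtain D where D: "|D| <o |B0|" "UNIV \<subseteq> span D" unfolding inI_def by auto
  have "infinite D" using D(2) infdim by blast
  then have "|B0| \<le>o |D|" using indep_card_le[OF indB0 spB0] D(2) by blast
  with D(1) show False using not_ordLess_ordLeq by blast
qed

end


context vector_space begin

lemma linD:
  assumes "Vector_Spaces.linear scale scale f"
  shows "f (x + y) = f x + f y" "f (c *s x) = c *s f x" "f (x - y) = f x - f y" "f (- x) = - f x" "f 0 = 0"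
proof -
  interpret module_hom scale scale f using assms module_hom_iff_linear by blast
  show "f (x + y) = f x + f y" "f (c *s x) = c *s f x" "f (x - y) = f x - f y" "f (- x) = - f x" "f 0 = 0"
    by (simp_all add: add scale diff neg)
qed

end

context idl begin

lemma scale2: "(c * 2) *s x = c *s x + c *s x" "(2 * c) *s x = c *s x + c *s x"
  by (metis mult_2_right scale_left_distrib, metis mult_2 scale_left_distrib)

lemma one_var:
  assumes le: "Vector_Spaces.linear scale scale e" and E: "\<And>x. e (e x) = \<delta> *s e x"
    and Q: "inI (\<lambda>v. K *s e v + L *s v)"
  shows "inI (\<lambda>v. (L * (K * \<delta> + L)) *s v)"
proof -
  have "inI (\<lambda>v. (K*\<delta>+L) *s (K *s e v + L *s v) - K *s e (K *s e v + L *s v))"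
    by (intro inI_diff inI_scale inI_left[OF le] Q)
  then show ?thesis
    by (rule inI_cong) (simp add: linD[OF le] E algebra_simps)
qed


lemma core:
  assumes l1: "Vector_Spaces.linear scale scale e1" and l2: "Vector_Spaces.linear scale scale e2"
    and l3: "Vector_Spaces.linear scale scale e3" and lw: "Vector_Spaces.linear scale scale w"
    and E1: "\<And>x. e1 (e1 x) = d1 *s e1 x" and E2: "\<And>x. e2 (e2 x) = d2 *s e2 x"
    and E3: "\<And>x. e3 (e3 x) = d3 *s e3 x"
    and sm: "\<And>v. e1 v + e2 v + e3 v = \<mu> *s v + w v"
    and wI: "inI w"
  shows "2 * \<mu> = d1 + d2 + d3 \<or> (\<exists>a\<in>{0,d1}. \<exists>b\<in>{0,d2}. \<exists>c\<in>{0,d3}. \<mu> = a + b + c)"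
proof -
  define S where "S = \<mu> + \<mu> - d3"
  define P where "P = \<mu> * (\<mu> - d3)"
  define a where "a = d1 - S"
  define b where "b = d2 - S"
  have e3d: "e3 x = \<mu> *s x + w x - e1 x - e2 x" for x using sm[of x] by (simp add: algebra_simps)
  define Z where "Z = (\<lambda>v. e1 (e2 v) + e2 (e1 v) + a *s e1 v + b *s e2 v + P *s v)"
  have Zeq0: "Z v = (e3 (e3 v) - d3 *s e3 v) - w (\<mu> *s v - e1 v - e2 v) - e3 (w v) + d3 *s w v" for v
    unfolding Z_def a_def b_def S_def P_def
    by (simp add: e3d linD[OF l1] linD[OF l2] linD[OF lw] E1 E2 algebra_simps)
      (simp only: scale2 add.assoc)
  have ZI: "inI Z"
  proof -
    have "inI (\<lambda>v. - w (\<mu> *s v - e1 v - e2 v) - e3 (w v) + d3 *s w v)"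
      by (intro inI_add inI_diff inI_neg inI_scale inI_right[OF wI] inI_left[OF l3] wI)
    then show ?thesis by (rule inI_cong) (simp add: Zeq0 E3)
  qed
  define Cm where "Cm = (\<lambda>v. e1 (e2 v) - e2 (e1 v))"
  have CI0: "inI (\<lambda>v. (d1 + b) *s Cm v)"
  proof -
    have "inI (\<lambda>v. e1 (Z v) - Z (e1 v))"
      by (rule inI_diff[OF inI_left[OF l1 ZI] inI_right[OF ZI]])
    then show ?thesis
      by (rule inI_cong) (simp add: Z_def Cm_def linD[OF l1] linD[OF l2] E1 E2 algebra_simps)
  qed
  show ?thesis
  proof (cases "d1 + b = 0")
    case True
    then show ?thesis unfolding b_def S_def by (auto simp: algebra_simps)
  next
    case False
    have CI: "inI Cm"
      using inI_scale[OF CI0, of "inverse (d1 + b)"] False by simp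
    define R where "R = (\<lambda>v. Z v + Cm v)"
    have RI: "inI R" unfolding R_def by (intro inI_add ZI CI)
    define K where "K = b*(d1+d1+b)*d2 + b*(d1*a+P) + P*(d1+d1+b)"
    define L where "L = P*(d1*a+P)"
    define R1 where "R1 = (\<lambda>v. (d1 + d1 + b) *s e2 v + (d1*a + P) *s v)"
    define X where "X = (\<lambda>v. e2 v + e2 v + a *s v)"
    have id4: "b *s e2 (R1 v) + P *s R1 v =
       (b *s e2 (R v) + P *s R v) - R (e1 (X v) - d1 *s X v) - (e1 (Cm (X v)) + e1 (Cm (X v)))" for v
      unfolding R1_def R_def X_def Z_def Cm_def
      by (simp add: linD[OF l1] linD[OF l2] E1 E2 algebra_simps)
        (simp only: mult.assoc[symmetric] scale2 add_ac)
    have QI0: "inI (\<lambda>v. b *s e2 (R1 v) + P *s R1 v)"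
    proof -
      have "inI (\<lambda>v. (b *s e2 (R v) + P *s R v) - R (e1 (X v) - d1 *s X v) - (e1 (Cm (X v)) + e1 (Cm (X v))))"
        by (intro inI_add inI_diff inI_scale inI_left[OF l2 RI] RI inI_right[OF RI] inI_left[OF l1] inI_right[OF CI])
      then show ?thesis by (rule inI_cong) (simp add: id4)
    qed
    have QI: "inI (\<lambda>v. K *s e2 v + L *s v)"
      using QI0 proof (rule inI_cong)
      fix v
      show "K *s e2 v + L *s v = b *s e2 (R1 v) + P *s R1 v"
        unfolding R1_def K_def L_def
        apply (simp add: linD[OF l2] E2 algebra_simps)
        apply (simp only: scale_left_distrib[symmetric])
        apply (rule arg_cong[of _ _ "\<lambda>c. c *s e2 v"])
        apply (simp add: algebra_simps)
        done
    qed
    have "inI (\<lambda>v. (L * (K * d2 + L)) *s v)" by (rule one_var[OF l2 E2 QI])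
    then have c0: "L * (K * d2 + L) = 0" using not_inI_id by blast
    define g where "g = (\<lambda>t. (\<mu> - t) * (\<mu> - t - d3))"
    have "L * (K * d2 + L) = g 0 * g d1 * g d2 * g (d1 + d2)"
      unfolding L_def K_def g_def a_def b_def S_def P_def by algebra
    with c0 have "g 0 = 0 \<or> g d1 = 0 \<or> g d2 = 0 \<or> g (d1 + d2) = 0" by simp
    then have "\<exists>a\<in>{0,d1}. \<exists>b\<in>{0,d2}. \<exists>c\<in>{0,d3}. \<mu> = a + b + c"
    proof -
      have gz: "g t = 0 \<Longrightarrow> \<mu> = t + 0 \<or> \<mu> = t + d3" for t
      proof -
        assume "g t = 0"
        then have "\<mu> - t = 0 \<or> \<mu> - t - d3 = 0" unfolding g_def by simp
        then show ?thesis by (auto simp: algebra_simps)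
      qed
      show ?thesis
        using \<open>g 0 = 0 \<or> g d1 = 0 \<or> g d2 = 0 \<or> g (d1 + d2) = 0\<close>
      proof (elim disjE)
        assume "g 0 = 0" then show ?thesis using gz[of 0] by (metis add_0 insertCI)
      next
        assume "g d1 = 0" then show ?thesis using gz[of d1] by (metis add_0_right insertCI)
      next
        assume "g d2 = 0" then show ?thesis using gz[of d2] by (metis add_0 insertCI)
      next
        assume "g (d1+d2) = 0" then show ?thesis using gz[of "d1+d2"] by (metis insertCI)
      qed
    qed
    then show ?thesis ..
  qed
qed

end


lemma degree_prod_lin: "degree (\<Prod>r\<leftarrow>rs. [:-r, 1::'a::field:]) = length rs"
proof (induction rs)
  case Nil then show ?case by simp
next
  case (Cons r rs)
  have nz: "(\<Prod>r\<leftarrow>rs. [:-r, 1::'a:]) \<noteq> 0"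
    by (auto simp: prod_list_zero_iff)
  have "degree ([:-r, 1:] * (\<Prod>r\<leftarrow>rs. [:-r, 1::'a:])) = degree [:-r, 1::'a:] + degree (\<Prod>r\<leftarrow>rs. [:-r, 1::'a:])"
    by (rule degree_mult_eq) (use nz in auto)
  then show ?case using Cons by simp
qed

lemma quad_form:
  fixes p :: "'a::field poly"
  assumes "split_poly p" "degree p = 2"
  shows "\<exists>c \<alpha> \<beta>. c \<noteq> 0 \<and> p = smult c ([:-\<alpha>,1:] * [:-\<beta>,1:])"
proof -
  from assms(1) obtain rs where p0: "p \<noteq> 0" and p: "p = smult (lead_coeff p) (\<Prod>r\<leftarrow>rs. [:-r, 1:])"
    unfolding split_poly_def by blast
  have "degree p = length rs" using p p0 degree_prod_lin[of rs]
    by (metis degree_smult_eq leading_coeff_0_iff)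
  with assms(2) have "length rs = 2" by simp
  then obtain x y where "rs = [x, y]"
    by (metis (no_types, lifting) One_nat_def Suc_1 length_0_conv length_Suc_conv)
  with p p0 show ?thesis by (intro exI[of _ "lead_coeff p"] exI[of _ x] exI[of _ y]) simp
qed

lemma quad_coeffs:
  fixes c \<alpha> \<beta> :: "'a::field"
  assumes "c \<noteq> 0"
  shows "degree (smult c ([:-\<alpha>,1:] * [:-\<beta>,1:])) = 2"
    "coeff (smult c ([:-\<alpha>,1:] * [:-\<beta>,1:])) 0 = c * (\<alpha> * \<beta>)"
    "coeff (smult c ([:-\<alpha>,1:] * [:-\<beta>,1:])) 1 = - c * (\<alpha> + \<beta>)"
    "coeff (smult c ([:-\<alpha>,1:] * [:-\<beta>,1:])) 2 = c"
  using assms by (simp_all add: numeral_2_eq_2 algebra_simps)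

context vector_space begin

lemma annih_quad:
  assumes c: "c \<noteq> 0" and lf: "Vector_Spaces.linear scale scale f"
    and an: "annihilates scale (smult c ([:-\<alpha>,1:] * [:-\<beta>,1:])) f"
  shows "f (f x - \<alpha> *s x) - \<alpha> *s (f x - \<alpha> *s x) = (\<beta> - \<alpha>) *s (f x - \<alpha> *s x)"
proof -
  have "poly_endo scale (smult c ([:-\<alpha>,1:] * [:-\<beta>,1:])) f x = 0"
    using an unfolding annihilates_def by blast
  then have "(c * (\<alpha> * \<beta>)) *s x + (- c * (\<alpha> + \<beta>)) *s f x + c *s f (f x) = 0"
    unfolding poly_endo_def quad_coeffs[OF c] using c
    by (simp add: numeral_2_eq_2 atMost_Suc algebra_simps)
  then have "inverse c *s ((c * (\<alpha> * \<beta>)) *s x + (- c * (\<alpha> + \<beta>)) *s f x + c *s f (f x)) = 0"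
    by simp
  then have ff: "f (f x) = (\<alpha> + \<beta>) *s f x - (\<alpha> * \<beta>) *s x"
    using c by (simp add: algebra_simps eq_neg_iff_add_eq_0 eq_diff_eq)
  show ?thesis
    by (simp add: linD[OF lf] ff algebra_simps)
qed

end

lemma quad_root: "c \<noteq> 0 \<Longrightarrow> poly (smult c ([:-\<alpha>,1:] * [:-\<beta>,1:])) x = 0 \<longleftrightarrow> x = \<alpha> \<or> x = (\<beta>::'a::field)"
proof -
  assume c: "c \<noteq> 0"
  have "poly (smult c ([:-\<alpha>,1:] * [:-\<beta>,1:])) x = c * ((x - \<alpha>) * (x - \<beta>))"
    by (simp add: algebra_simps)
  then show ?thesis using c by simp
qed

lemma quad_tr: "c \<noteq> 0 \<Longrightarrow> tr_poly (smult c ([:-\<alpha>,1:] * [:-\<beta>,1:])) = \<alpha> + (\<beta>::'a::field)"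
  unfolding tr_poly_def using quad_coeffs[of c \<alpha> \<beta>] by simp

lemma lin_shift:
  assumes "vector_space scale" "Vector_Spaces.linear scale scale f"
  shows "Vector_Spaces.linear scale scale (\<lambda>x. f x - scale a x)"
proof -
  interpret vector_space scale by fact
  show ?thesis unfolding Vector_Spaces.linear_iff
  proof (intro conjI allI)
    show "vector_space scale" by fact
    show "vector_space scale" by fact
    fix x y show "f (x + y) - scale a (x + y) = f x - scale a x + (f y - scale a y)"
      by (simp add: linD[OF assms(2)] scale_right_distrib)
  next
    fix c x show "f (scale c x) - scale a (scale c x) = scale c (f x - scale a x)"
      by (simp add: linD[OF assms(2)] scale_right_diff_distrib mult.commute)
  qed
qed

theorem theorem3:
  fixes scale :: "'a::field \<Rightarrow> 'v::ab_group_add \<Rightarrow> 'v"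
    and p1 p2 p3 :: "'a poly" and u :: "'v \<Rightarrow> 'v" and lam :: 'a
  assumes "vector_space scale"
    and "infinite_dimensional scale"
    and "split_poly p1" "degree p1 = 2"
    and "split_poly p2" "degree p2 = 2"
    and "split_poly p3" "degree p3 = 2"
    and "Vector_Spaces.linear scale scale u"
    and "dominant_eigenvalue scale u lam"
    and "is_sum3 scale p1 p2 p3 u"
  shows "scalar_sum3 p1 p2 p3 lam \<or> 2 * lam = tr_poly p1 + tr_poly p2 + tr_poly p3"
proof -
  interpret vs: vector_space scale by fact
  note vsa = assms(1)
  from assms(10) obtain B C where B: "is_basis_of scale UNIV B"
    and C: "is_basis_of scale (range (\<lambda>x. u x - scale lam x)) C" and BC: "ordLess2 (card_of C) (card_of B)"
    unfolding dominant_eigenvalue_def by blast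
  interpret I: idl scale B
    apply unfold_locales
    using B assms(2) unfolding is_basis_of_def infinite_dimensional_def by auto
  obtain c1 a1 b1 where c1: "c1 \<noteq> 0" and p1: "p1 = smult c1 ([:-a1,1:] * [:-b1,1:])"
    using quad_form[OF assms(3,4)] by blast
  obtain c2 a2 b2 where c2: "c2 \<noteq> 0" and p2: "p2 = smult c2 ([:-a2,1:] * [:-b2,1:])"
    using quad_form[OF assms(5,6)] by blast
  obtain c3 a3 b3 where c3: "c3 \<noteq> 0" and p3: "p3 = smult c3 ([:-a3,1:] * [:-b3,1:])"
    using quad_form[OF assms(7,8)] by blast
  from assms(11) obtain u1 u2 u3 where l1: "Vector_Spaces.linear scale scale u1"
    and l2: "Vector_Spaces.linear scale scale u2" and l3: "Vector_Spaces.linear scale scale u3"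
    and an1: "annihilates scale p1 u1" and an2: "annihilates scale p2 u2" and an3: "annihilates scale p3 u3"
    and us: "\<And>x. u x = u1 x + u2 x + u3 x"
    unfolding is_sum3_def by blast
  define e1 where "e1 = (\<lambda>x. u1 x - scale a1 x)"
  define e2 where "e2 = (\<lambda>x. u2 x - scale a2 x)"
  define e3 where "e3 = (\<lambda>x. u3 x - scale a3 x)"
  define w where "w = (\<lambda>x. u x - scale lam x)"
  have le1: "Vector_Spaces.linear scale scale e1" unfolding e1_def by (rule lin_shift[OF vsa l1])
  have le2: "Vector_Spaces.linear scale scale e2" unfolding e2_def by (rule lin_shift[OF vsa l2])
  have le3: "Vector_Spaces.linear scale scale e3" unfolding e3_def by (rule lin_shift[OF vsa l3])
  have lw: "Vector_Spaces.linear scale scale w" unfolding w_def by (rule lin_shift[OF vsa assms(9)])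
  have E1: "e1 (e1 x) = scale (b1 - a1) (e1 x)" for x
    unfolding e1_def using vs.annih_quad[OF c1 l1 an1[unfolded p1]] .
  have E2: "e2 (e2 x) = scale (b2 - a2) (e2 x)" for x
    unfolding e2_def using vs.annih_quad[OF c2 l2 an2[unfolded p2]] .
  have E3: "e3 (e3 x) = scale (b3 - a3) (e3 x)" for x
    unfolding e3_def using vs.annih_quad[OF c3 l3 an3[unfolded p3]] .
  have sm: "e1 v + e2 v + e3 v = scale (lam - (a1 + a2 + a3)) v + w v" for v
    unfolding e1_def e2_def e3_def w_def us by (simp add: vs.scale_left_distrib vs.scale_left_diff_distrib algebra_simps)
  have wI: "I.inI w"
    unfolding I.inI_def w_def using C BC unfolding is_basis_of_def by blast
  from I.core[OF le1 le2 le3 lw E1 E2 E3 sm wI]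
  have "2 * (lam - (a1 + a2 + a3)) = (b1 - a1) + (b2 - a2) + (b3 - a3) \<or>
    (\<exists>a\<in>{0, b1 - a1}. \<exists>b\<in>{0, b2 - a2}. \<exists>c\<in>{0, b3 - a3}. lam - (a1 + a2 + a3) = a + b + c)" .
  then show ?thesis
  proof
    assume h: "2 * (lam - (a1 + a2 + a3)) = (b1 - a1) + (b2 - a2) + (b3 - a3)"
    have "2 * lam = tr_poly p1 + tr_poly p2 + tr_poly p3"
      unfolding p1 p2 p3 quad_tr[OF c1] quad_tr[OF c2] quad_tr[OF c3] using h
      by (simp add: algebra_simps)
    then show ?thesis ..
  next
    assume "\<exists>a\<in>{0, b1 - a1}. \<exists>b\<in>{0, b2 - a2}. \<exists>c\<in>{0, b3 - a3}. lam - (a1 + a2 + a3) = a + b + c"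
    then obtain x y z where x: "x \<in> {0, b1 - a1}" and y: "y \<in> {0, b2 - a2}" and z: "z \<in> {0, b3 - a3}"
      and h: "lam - (a1 + a2 + a3) = x + y + z" by blast
    have "poly p1 (a1 + x) = 0" using x unfolding p1 quad_root[OF c1] by auto
    moreover have "poly p2 (a2 + y) = 0" using y unfolding p2 quad_root[OF c2] by auto
    moreover have "poly p3 (a3 + z) = 0" using z unfolding p3 quad_root[OF c3] by auto
    moreover have "lam = (a1 + x) + (a2 + y) + (a3 + z)" using h by (simp add: algebra_simps)
    ultimately have "scalar_sum3 p1 p2 p3 lam" unfolding scalar_sum3_def by blast
    then show ?thesis ..
  qed
qed


end
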